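(* Let $n$ be a positive integer, $f:\mathbb{Z}_n\to\mathbb C$, and $T_f=\max_{A\in\mathcal A_n}|f(A)|$. For every positive integer $m\le n$, \[n^2T_f^2+\sum_{1\le k<m:\ k\mid n}\frac{m^2\phi(k)}{k}G_f(n/k)\ge\sum_{r\in\mathbb{Z}_n}|\widehat f(r)|^2\cdot\max\left(\frac{m^2\gcd(r,n)}{n},\,m\right).\]
   Context: An arithmetic progression in $\mathbb{Z}_n$ is a set $\{a+kd: 0\le k<l\}$ with $a,d\in\mathbb{Z}_n$ and $l$ an integer with $0\le l\le n/\gcd(n,d)$ (with $\gcd(0,n)=n$, and $\gcd(r,n)$ for $r\in\mathbb{Z}_n$ computed from any integer representative); $\mathcal A_n$ is the family of all of them. $f(A)=\sum_{x\in A}f(x)$. The Fourier transform is $\widehat f(s)=\sum_{x\in\mathbb{Z}_n}f(x)e^{-2\pi i xs/n}$. For a positive divisor $r$ of $n$ and $a\in\mathbb{Z}_n$, $g_f(a,r)=\sum_{x\in\mathbb{Z}_n:\,x=a+jr\text{ for some }j\in\mathbb{Z}_n}f(x)$ and $G_f(r)=\sum_{a=0}^{r-1}|g_f(a,r)|^2$. $\phi$ is Euler's totient function. *)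

theory Defs
  imports "HOL-Analysis.Analysis" "HOL-Number_Theory.Number_Theory"
begin

text \<open>Z_n is modelled by the residues {0..<n} (n > 0) with arithmetic mod n;
  a function on Z_n is a function nat => complex whose values on {0..<n} matter.\<close>

definition ap_family :: "nat \<Rightarrow> nat set set" where
  "ap_family n = {{(a + k * d) mod n | k. k < l} | a d l.
      a < n \<and> d < n \<and> l \<le> n div gcd d n}"

definition setsum_f :: "(nat \<Rightarrow> complex) \<Rightarrow> nat set \<Rightarrow> complex" where
  "setsum_f f A = (\<Sum>x\<in>A. f x)"

definition T_f :: "nat \<Rightarrow> (nat \<Rightarrow> complex) \<Rightarrow> real" where
  "T_f n f = Max ((\<lambda>A. cmod (setsum_f f A)) ` ap_family n)"

definition fourier :: "nat \<Rightarrow> (nat \<Rightarrow> complex) \<Rightarrow> nat \<Rightarrow> complex" where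
  "fourier n f s = (\<Sum>x<n. f x * exp (- 2 * pi * \<i> * of_nat x * of_nat s / of_nat n))"

definition g_f :: "nat \<Rightarrow> (nat \<Rightarrow> complex) \<Rightarrow> nat \<Rightarrow> nat \<Rightarrow> complex" where
  "g_f n f a r = (\<Sum>x\<in>{x. x < n \<and> (\<exists>j<n. x = (a + j * r) mod n)}. f x)"

definition G_f :: "nat \<Rightarrow> (nat \<Rightarrow> complex) \<Rightarrow> nat \<Rightarrow> real" where
  "G_f n f r = (\<Sum>a<r. (cmod (g_f n f a r))\<^sup>2)"

end

theory Submission
  imports Defs
begin


definition E :: "nat \<Rightarrow> int \<Rightarrow> complex" where
  "E n t = exp (2 * pi * \<i> * of_int t / of_nat n)"

lemma E_add: "E n (a + b) = E n a * E n b"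
  unfolding E_def by (simp add: exp_add[symmetric] add_divide_distrib distrib_left)

lemma E_cnj: "cnj (E n t) = E n (- t)"
  unfolding E_def by (simp add: exp_cnj)

lemma E_dvd: assumes "n > 0" "int n dvd t" shows "E n t = 1"
proof -
  obtain k where k: "t = int n * k" using assms(2) by (auto elim: dvdE)
  have "E n t = exp (\<i> * (of_int k * (of_real pi * 2)))"
    unfolding E_def k using assms(1) by (simp add: field_simps)
  then show ?thesis by simp
qed

lemma E_pow: "E n (t * int s) = (E n t) ^ s"
  unfolding E_def by (simp add: exp_of_nat_mult[symmetric] field_simps)

lemma E_eq_1: assumes "n > 0" "E n t = 1" shows "int n dvd t"
proof -
  from assms(2) obtain k :: int where "Im (2 * pi * \<i> * of_int t / of_nat n) = of_int (2 * k) * pi"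
    unfolding E_def exp_eq_1 by blast
  then have "2 * pi * of_int t / of_nat n = of_int (2 * k) * pi" by simp
  then have "of_int t = real n * of_int k" using assms(1) pi_gt_zero
    by (simp add: field_simps)
  then have "t = int n * k" by (metis of_int_eq_iff of_int_mult of_int_of_nat_eq)
  then show ?thesis by simp
qed

lemma E_orth: assumes "n > 0"
  shows "(\<Sum>s<n. E n (t * int s)) = (if int n dvd t then of_nat n else 0)"
proof (cases "int n dvd t")
  case True
  then have "\<And>s. E n (t * int s) = 1" using assms E_dvd by auto
  then show ?thesis using True by simp
next
  case False
  then have ne: "E n t \<noteq> 1" using E_eq_1 assms by blast
  have "E n t ^ n = 1" using E_pow[of n t n] E_dvd assms by simp
  then show ?thesis using False ne by (simp add: E_pow sum_gp_strict)
qed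



definition FF :: "nat \<Rightarrow> (nat \<Rightarrow> complex) \<Rightarrow> nat \<Rightarrow> complex" where
  "FF n f x = f (x mod n)"

definition Sd :: "nat \<Rightarrow> (nat \<Rightarrow> complex) \<Rightarrow> nat \<Rightarrow> nat \<Rightarrow> nat \<Rightarrow> complex" where
  "Sd n f m d a = (\<Sum>j<m. FF n f (a + j * d))"

definition ind :: "bool \<Rightarrow> complex" where "ind P = (if P then 1 else 0)"

lemma sum_ind_M:
  assumes "n > 0"
  shows "(\<Sum>x<n. g x * ind (int n dvd (int x - t))) = g (nat (t mod int n))"
proof -
  have set: "{x\<in>{..<n}. int n dvd (int x - t)} = {nat (t mod int n)}"
  proof (intro equalityI subsetI)
    fix x assume "x \<in> {x\<in>{..<n}. int n dvd (int x - t)}"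
    then have x: "x < n" "int n dvd (int x - t)" by auto
    then have "int x mod int n = t mod int n" using mod_eq_dvd_iff x(2) by blast
    moreover have "int x mod int n = int x" using x by simp
    ultimately have "int x = t mod int n" by simp
    then show "x \<in> {nat (t mod int n)}" by simp
  next
    fix x assume "x \<in> {nat (t mod int n)}"
    then have x: "x = nat (t mod int n)" by simp
    have "t mod int n \<ge> 0" "t mod int n < int n" using assms by auto
    then have "int x = t mod int n" "x < n" using x by auto
    moreover then have "int n dvd (int x - t)" by (simp add: mod_eq_dvd_iff[symmetric])
    ultimately show "x \<in> {x\<in>{..<n}. int n dvd (int x - t)}" by simp
  qed
  have "(\<Sum>x<n. g x * ind (int n dvd (int x - t))) = (\<Sum>x<n. if int n dvd (int x - t) then g x else 0)"
    unfolding ind_def by (intro sum.cong) auto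
  also have "\<dots> = (\<Sum>x\<in>{x\<in>{..<n}. int n dvd (int x - t)}. g x)"
    by (rule sum.inter_filter[symmetric]) simp
  also have "\<dots> = g (nat (t mod int n))" unfolding set by simp
  finally show ?thesis .
qed

lemma FF_expand:
  assumes "n > 0"
  shows "FF n f b = (\<Sum>x<n. f x * ind (int n dvd (int x - int b)))"
proof -
  have "nat (int b mod int n) = b mod n" by (simp add: nat_mod_distrib)
  then show ?thesis using sum_ind_M[OF assms, of f "int b"] unfolding FF_def by simp
qed

lemma ind_mult: "ind P * ind Q = ind (P \<and> Q)" unfolding ind_def by simp

lemma lemA:
  assumes "n > 0"
  shows "(\<Sum>a<n. FF n f (a + u) * cnj (FF n f (a + v))) =
    (\<Sum>x<n. \<Sum>y<n. f x * cnj (f y) * ind (int n dvd (int y - int x + int u - int v)))"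
proof -
  have cnjind: "cnj (ind P) = ind P" for P unfolding ind_def by simp
  have inner: "(\<Sum>a<n. ind (int n dvd (int x - int (a + u))) * ind (int n dvd (int y - int (a + v))))
      = ind (int n dvd (int y - int x + int u - int v))" for x y :: nat
  proof -
    have e1: "ind (int n dvd (int x - int (a + u))) = ind (int n dvd (int a - (int x - int u)))" for a
    proof -
      have eq: "int x - int (a + u) = - (int a - (int x - int u))" by simp
      show ?thesis unfolding eq dvd_minus_iff ..
    qed
    have "(\<Sum>a<n. ind (int n dvd (int x - int (a + u))) * ind (int n dvd (int y - int (a + v))))
       = (\<Sum>a<n. ind (int n dvd (int y - int (a + v))) * ind (int n dvd (int a - (int x - int u))))"
      using e1 by (simp add: mult.commute)
    also have "\<dots> = ind (int n dvd (int y - int (nat ((int x - int u) mod int n) + v)))"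
      by (rule sum_ind_M[OF assms])
    also have "\<dots> = ind (int n dvd (int y - int x + int u - int v))"
    proof -
      have nn: "int (nat ((int x - int u) mod int n)) = (int x - int u) mod int n" using assms by simp
      have "int y - int (nat ((int x - int u) mod int n) + v)
          = (int y - int x + int u - int v) + int n * ((int x - int u) div int n)"
        using nn by (simp add: algebra_simps minus_mod_eq_mult_div[symmetric] mod_div_mult_eq)
      then have "(int n dvd (int y - int (nat ((int x - int u) mod int n) + v))) = (int n dvd (int y - int x + int u - int v))"
        by (metis dvd_add_left_iff dvd_triv_left)
      then show ?thesis by simp
    qed
    finally show ?thesis .
  qed
  have "(\<Sum>a<n. FF n f (a + u) * cnj (FF n f (a + v))) =
     (\<Sum>a<n. \<Sum>x<n. \<Sum>y<n. f x * cnj (f y) * (ind (int n dvd (int x - int (a + u))) * ind (int n dvd (int y - int (a + v)))))"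
    unfolding FF_expand[OF assms] cnj_sum sum_product by (intro sum.cong refl) (simp add: cnjind mult_ac)
  also have "\<dots> = (\<Sum>x<n. \<Sum>a<n. \<Sum>y<n. f x * cnj (f y) * (ind (int n dvd (int x - int (a + u))) * ind (int n dvd (int y - int (a + v)))))"
    by (rule sum.swap)
  also have "\<dots> = (\<Sum>x<n. \<Sum>y<n. \<Sum>a<n. f x * cnj (f y) * (ind (int n dvd (int x - int (a + u))) * ind (int n dvd (int y - int (a + v)))))"
    by (rule sum.cong[OF refl], rule sum.swap)
  also have "\<dots> = (\<Sum>x<n. \<Sum>y<n. f x * cnj (f y) * ind (int n dvd (int y - int x + int u - int v)))"
    by (simp only: sum_distrib_left[symmetric] inner)
  finally show ?thesis .
qed

lemma fourier_E: "fourier n f s = (\<Sum>x<n. f x * E n (- (int x * int s)))"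
  unfolding fourier_def E_def by (simp add: field_simps)

lemma fourier_sq:
  "complex_of_real ((cmod (fourier n f s))\<^sup>2) = (\<Sum>x<n. \<Sum>y<n. f x * cnj (f y) * E n ((int y - int x) * int s))"
proof -
  have "complex_of_real ((cmod (fourier n f s))\<^sup>2) = fourier n f s * cnj (fourier n f s)"
    by (rule complex_norm_square)
  also have "\<dots> = (\<Sum>x<n. \<Sum>y<n. (f x * E n (- (int x * int s))) * (cnj (f y) * E n (int y * int s)))"
    unfolding fourier_E cnj_sum sum_product by (simp add: E_cnj)
  also have "\<dots> = (\<Sum>x<n. \<Sum>y<n. f x * cnj (f y) * E n ((int y - int x) * int s))"
  proof -
    have "E n (- (int x * int s)) * E n (int y * int s) = E n ((int y - int x) * int s)" for x y
      by (simp add: E_add[symmetric] algebra_simps)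
    then show ?thesis by (simp add: mult_ac)
  qed
  finally show ?thesis .
qed

lemma parseval_t:
  assumes "n > 0"
  shows "(\<Sum>s<n. complex_of_real ((cmod (fourier n f s))\<^sup>2) * E n (t * int s))
       = of_nat n * (\<Sum>x<n. \<Sum>y<n. f x * cnj (f y) * ind (int n dvd (int y - int x + t)))"
proof -
  have "(\<Sum>s<n. complex_of_real ((cmod (fourier n f s))\<^sup>2) * E n (t * int s))
     = (\<Sum>s<n. \<Sum>x<n. \<Sum>y<n. f x * cnj (f y) * E n ((int y - int x + t) * int s))"
  proof -
    show ?thesis unfolding fourier_sq
      apply (simp only: sum_distrib_right)
      apply (intro sum.cong refl)
      apply (simp only: mult.assoc E_add[symmetric])
      apply (simp add: algebra_simps)
      done
  qed
  also have "\<dots> = (\<Sum>x<n. \<Sum>s<n. \<Sum>y<n. f x * cnj (f y) * E n ((int y - int x + t) * int s))"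
    by (rule sum.swap)
  also have "\<dots> = (\<Sum>x<n. \<Sum>y<n. \<Sum>s<n. f x * cnj (f y) * E n ((int y - int x + t) * int s))"
    by (rule sum.cong[OF refl], rule sum.swap)
  also have "\<dots> = (\<Sum>x<n. \<Sum>y<n. f x * cnj (f y) * (of_nat n * ind (int n dvd (int y - int x + t))))"
    apply (simp add: sum_distrib_left[symmetric] E_orth[OF assms] ind_def)
    apply (intro sum.cong refl)
    by simp
  also have "\<dots> = of_nat n * (\<Sum>x<n. \<Sum>y<n. f x * cnj (f y) * ind (int n dvd (int y - int x + t)))"
    by (simp add: sum_distrib_left mult_ac)
  finally show ?thesis .
qed



definition Wr :: "nat \<Rightarrow> nat \<Rightarrow> nat \<Rightarrow> real" where
  "Wr n m s = (\<Sum>d<n. (cmod (\<Sum>j<m. E n (int j * int d * int s)))\<^sup>2)"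

lemma W_expand:
  "complex_of_real (Wr n m s) = (\<Sum>d<n. \<Sum>j<m. \<Sum>j'<m. E n ((int j - int j') * int d * int s))"
proof -
  have "complex_of_real (Wr n m s) = (\<Sum>d<n. (\<Sum>j<m. E n (int j * int d * int s)) * cnj (\<Sum>j<m. E n (int j * int d * int s)))"
    unfolding Wr_def of_real_sum complex_norm_square ..
  also have "\<dots> = (\<Sum>d<n. \<Sum>j<m. \<Sum>j'<m. E n ((int j - int j') * int d * int s))"
    unfolding cnj_sum sum_product E_cnj
    by (intro sum.cong refl) (simp add: E_add[symmetric] algebra_simps)
  finally show ?thesis .
qed

lemma main_id:
  assumes "n > 0"
  shows "(\<Sum>s<n. (cmod (fourier n f s))\<^sup>2 * Wr n m s) = real n * (\<Sum>d<n. \<Sum>a<n. (cmod (Sd n f m d a))\<^sup>2)"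
proof -
  let ?P = "\<lambda>s. complex_of_real ((cmod (fourier n f s))\<^sup>2)"
  let ?Q = "\<lambda>t. (\<Sum>x<n. \<Sum>y<n. f x * cnj (f y) * ind (int n dvd (int y - int x + t)))"
  have "complex_of_real (\<Sum>s<n. (cmod (fourier n f s))\<^sup>2 * Wr n m s)
      = (\<Sum>s<n. \<Sum>d<n. \<Sum>j<m. \<Sum>j'<m. ?P s * E n (((int j - int j') * int d) * int s))"
    unfolding of_real_sum of_real_mult W_expand sum_distrib_left by (simp add: mult.assoc)
  also have "\<dots> = (\<Sum>d<n. \<Sum>s<n. \<Sum>j<m. \<Sum>j'<m. ?P s * E n (((int j - int j') * int d) * int s))"
    by (rule sum.swap)
  also have "\<dots> = (\<Sum>d<n. \<Sum>j<m. \<Sum>s<n. \<Sum>j'<m. ?P s * E n (((int j - int j') * int d) * int s))"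
    by (intro sum.cong refl sum.swap)
  also have "\<dots> = (\<Sum>d<n. \<Sum>j<m. \<Sum>j'<m. \<Sum>s<n. ?P s * E n (((int j - int j') * int d) * int s))"
    by (intro sum.cong refl sum.swap)
  also have "\<dots> = (\<Sum>d<n. \<Sum>j<m. \<Sum>j'<m. of_nat n * ?Q ((int j - int j') * int d))"
    by (simp only: parseval_t[OF assms])
  also have "\<dots> = of_nat n * (\<Sum>d<n. \<Sum>j<m. \<Sum>j'<m. \<Sum>a<n. FF n f (a + j * d) * cnj (FF n f (a + j' * d)))"
  proof -
    have "?Q ((int j - int j') * int d) = (\<Sum>a<n. FF n f (a + j * d) * cnj (FF n f (a + j' * d)))" for j j' d
      unfolding lemA[OF assms] by (simp add: algebra_simps)
    then show ?thesis by (simp add: sum_distrib_left)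
  qed
  also have "\<dots> = of_nat n * (\<Sum>d<n. \<Sum>a<n. Sd n f m d a * cnj (Sd n f m d a))"
  proof -
    have "(\<Sum>a<n. Sd n f m d a * cnj (Sd n f m d a)) = (\<Sum>j<m. \<Sum>j'<m. \<Sum>a<n. FF n f (a + j * d) * cnj (FF n f (a + j' * d)))" for d
    proof -
      have "(\<Sum>a<n. Sd n f m d a * cnj (Sd n f m d a)) = (\<Sum>a<n. \<Sum>j<m. \<Sum>j'<m. FF n f (a + j * d) * cnj (FF n f (a + j' * d)))"
        unfolding Sd_def cnj_sum sum_product ..
      also have "\<dots> = (\<Sum>j<m. \<Sum>a<n. \<Sum>j'<m. FF n f (a + j * d) * cnj (FF n f (a + j' * d)))"
        by (rule sum.swap)
      also have "\<dots> = (\<Sum>j<m. \<Sum>j'<m. \<Sum>a<n. FF n f (a + j * d) * cnj (FF n f (a + j' * d)))"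
        by (intro sum.cong refl sum.swap)
      finally show ?thesis .
    qed
    then show ?thesis by simp
  qed
  also have "\<dots> = complex_of_real (real n * (\<Sum>d<n. \<Sum>a<n. (cmod (Sd n f m d a))\<^sup>2))"
    unfolding of_real_mult of_real_sum complex_norm_square by simp
  finally show ?thesis by (simp only: of_real_eq_iff)
qed



lemma Wr_count:
  assumes "n > 0"
  shows "Wr n m s = (\<Sum>j<m. \<Sum>j'<m. if int n dvd ((int j - int j') * int s) then real n else 0)"
proof -
  have "complex_of_real (Wr n m s) = (\<Sum>d<n. \<Sum>j<m. \<Sum>j'<m. E n (((int j - int j') * int s) * int d))"
    unfolding W_expand by (simp add: mult_ac)
  also have "\<dots> = (\<Sum>j<m. \<Sum>d<n. \<Sum>j'<m. E n (((int j - int j') * int s) * int d))"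
    by (rule sum.swap)
  also have "\<dots> = (\<Sum>j<m. \<Sum>j'<m. \<Sum>d<n. E n (((int j - int j') * int s) * int d))"
    by (intro sum.cong refl sum.swap)
  also have "\<dots> = complex_of_real (\<Sum>j<m. \<Sum>j'<m. if int n dvd ((int j - int j') * int s) then real n else 0)"
    unfolding E_orth[OF assms] of_real_sum by (intro sum.cong refl) simp
  finally show ?thesis by (simp only: of_real_eq_iff)
qed

lemma Wr_ge1:
  assumes "n > 0"
  shows "real n * real m \<le> Wr n m s"
proof -
  have "real n \<le> (\<Sum>j'<m. if int n dvd ((int j - int j') * int s) then real n else 0)" if "j < m" for j
  proof -
    have "real n = (if int n dvd ((int j - int j) * int s) then real n else 0)" by simp
    also have "\<dots> \<le> (\<Sum>j'<m. if int n dvd ((int j - int j') * int s) then real n else 0)"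
      by (rule member_le_sum[where f="\<lambda>j'. if int n dvd ((int j - int j') * int s) then real n else 0"]) (use that in auto)
    finally show ?thesis .
  qed
  then have "(\<Sum>j<m. real n) \<le> Wr n m s" unfolding Wr_count[OF assms] by (intro sum_mono) auto
  then show ?thesis by (simp add: mult.commute)
qed

lemma Wr_ge2:
  assumes "n > 0"
  shows "(real m)\<^sup>2 * real (gcd s n) \<le> Wr n m s"
proof -
  define g where "g = gcd s n"
  define q where "q = n div g"
  have gpos: "g > 0" using assms g_def by simp
  have gn: "g * q = n" unfolding q_def g_def by simp
  have qpos: "q > 0" using gn assms by (metis gr0I mult_0_right)
  define D0 where "D0 = (\<lambda>k. k * q) ` {..<g}"
  have cardD0: "card D0 = g" unfolding D0_def using qpos by (subst card_image) (auto simp: inj_on_def)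
  have D0sub: "D0 \<subseteq> {..<n}"
  proof
    fix d assume "d \<in> D0"
    then obtain k where k: "k < g" "d = k * q" unfolding D0_def by auto
    then have "k * q < g * q" using qpos by simp
    then show "d \<in> {..<n}" using k gn by simp
  qed
  have val: "(cmod (\<Sum>j<m. E n (int j * int d * int s)))\<^sup>2 = (real m)\<^sup>2" if "d \<in> D0" for d
  proof -
    obtain k where k: "d = k * q" using \<open>d \<in> D0\<close> unfolding D0_def by auto
    obtain s' where s': "s = g * s'" unfolding g_def by (metis dvd_def gcd_dvd1)
    have "d * s = n * (k * s')" using k s' gn by (simp add: mult_ac)
    then have "int n dvd int j * int d * int s" for j
      by (metis dvd_mult dvd_triv_left mult.assoc of_nat_mult)
    then have "E n (int j * int d * int s) = 1" for j using E_dvd assms by blast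
    then show ?thesis by simp
  qed
  have "(real m)\<^sup>2 * real g = (\<Sum>d\<in>D0. (cmod (\<Sum>j<m. E n (int j * int d * int s)))\<^sup>2)"
    using val cardD0 by simp
  also have "\<dots> \<le> Wr n m s" unfolding Wr_def
    by (rule sum_mono2) (use D0sub in auto)
  finally show ?thesis unfolding g_def .
qed

lemma pointwise_bound:
  assumes "n > 0"
  shows "(cmod (fourier n f r))\<^sup>2 * max ((real m)\<^sup>2 * real (gcd r n) / real n) (real m)
      \<le> (cmod (fourier n f r))\<^sup>2 * Wr n m r / real n"
proof -
  have "max ((real m)\<^sup>2 * real (gcd r n) / real n) (real m) \<le> Wr n m r / real n"
    using Wr_ge1[OF assms, of m r] Wr_ge2[OF assms, of m r] assms
    by (simp add: field_simps)
  then have "(cmod (fourier n f r))\<^sup>2 * max ((real m)\<^sup>2 * real (gcd r n) / real n) (real m)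
      \<le> (cmod (fourier n f r))\<^sup>2 * (Wr n m r / real n)" by (intro mult_left_mono) auto
  then show ?thesis by simp
qed

lemma rhs_bound:
  assumes "n > 0"
  shows "(\<Sum>r<n. (cmod (fourier n f r))\<^sup>2 * max ((real m)\<^sup>2 * real (gcd r n) / real n) (real m))
     \<le> (\<Sum>d<n. \<Sum>a<n. (cmod (Sd n f m d a))\<^sup>2)"
proof -
  have "(\<Sum>r<n. (cmod (fourier n f r))\<^sup>2 * max ((real m)\<^sup>2 * real (gcd r n) / real n) (real m))
     \<le> (\<Sum>r<n. (cmod (fourier n f r))\<^sup>2 * Wr n m r / real n)"
    by (intro sum_mono pointwise_bound assms)
  also have "\<dots> = (\<Sum>r<n. (cmod (fourier n f r))\<^sup>2 * Wr n m r) / real n"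
    by (simp add: sum_divide_distrib)
  also have "\<dots> = (\<Sum>d<n. \<Sum>a<n. (cmod (Sd n f m d a))\<^sup>2)"
    unfolding main_id[OF assms] using assms by simp
  finally show ?thesis .
qed



definition CC :: "nat \<Rightarrow> (nat \<Rightarrow> complex) \<Rightarrow> nat \<Rightarrow> nat \<Rightarrow> nat \<Rightarrow> complex" where
  "CC n f k d a = (\<Sum>j<k. FF n f (a + j * d))"

lemma FF_mod_add: "FF n f (x mod n + y) = FF n f (x + y)"
  unfolding FF_def by (simp add: mod_add_left_eq)

lemma FF_mod: "FF n f (x mod n) = FF n f x"
  using FF_mod_add[of n f x 0] by simp

lemma kd_dvd: "(n::nat) dvd (n div gcd d n) * d"
proof -
  have "gcd d n dvd d" by (rule gcd_dvd1)
  then obtain d' where d': "d = gcd d n * d'" by (elim dvdE)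
  have "(n div gcd d n) * d = (n div gcd d n * gcd d n) * d'" unfolding mult.assoc using d' by simp
  also have "\<dots> = n * d'" by simp
  finally show ?thesis by simp
qed

lemma FF_period: "FF n f (b + (n div gcd d n) * d) = FF n f b"
proof -
  obtain c where c: "(n div gcd d n) * d = n * c" using kd_dvd by (metis dvd_def)
  show ?thesis unfolding FF_def c by simp
qed

lemma sum_split: "(\<Sum>j<(k::nat)+t. h j) = (\<Sum>j<k. h j) + (\<Sum>j<t. h (k+j))"
  by (induction t) (simp_all add: add.assoc)

lemma Sd_decomp:
  assumes "k = n div gcd d n"
  shows "(\<Sum>j<q*k + r. FF n f (a + j * d)) = of_nat q * CC n f k d a + (\<Sum>j<r. FF n f (a + j * d))"
proof (induction q)
  case 0 then show ?case by simp
next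
  case (Suc q)
  have "(\<Sum>j<Suc q * k + r. FF n f (a + j * d)) = (\<Sum>j<k + (q*k + r). FF n f (a + j * d))"
    by (simp add: add.assoc)
  also have "\<dots> = CC n f k d a + (\<Sum>j<q*k + r. FF n f (a + (k + j) * d))"
    unfolding sum_split CC_def ..
  also have "(\<Sum>j<q*k + r. FF n f (a + (k + j) * d)) = (\<Sum>j<q*k + r. FF n f (a + j * d))"
  proof (intro sum.cong refl)
    fix j
    have "a + (k + j) * d = (a + j * d) + (n div gcd d n) * d" using assms by (simp add: algebra_simps)
    then show "FF n f (a + (k + j) * d) = FF n f (a + j * d)" using FF_period by metis
  qed
  finally show ?case using Suc by (simp add: algebra_simps)
qed

lemma CC_shift1:
  assumes "k = n div gcd d n"
  shows "CC n f k d (a + d) = CC n f k d a"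
proof -
  have "CC n f k d (a + d) + FF n f (a + 0 * d) = (\<Sum>j<Suc k. FF n f (a + j * d))"
    unfolding CC_def sum.lessThan_Suc_shift by (simp add: algebra_simps)
  also have "\<dots> = CC n f k d a + FF n f (a + k * d)"
    unfolding CC_def by simp
  also have "FF n f (a + k * d) = FF n f a" using assms FF_period by simp
  finally show ?thesis by simp
qed

lemma CC_shift:
  assumes "k = n div gcd d n"
  shows "CC n f k d (a + j * d) = CC n f k d a"
proof (induction j)
  case 0 then show ?case by simp
next
  case (Suc j)
  have "a + Suc j * d = (a + j * d) + d" by simp
  then show ?case using CC_shift1[OF assms] Suc by metis
qed

lemma CC_mod: "CC n f k d (x mod n) = CC n f k d x"
  unfolding CC_def by (simp add: FF_mod_add add.assoc)

lemma shift_inv: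
  fixes n t :: nat
  assumes "n > 0"
  shows "(\<Sum>a<n. \<psi> ((a + t) mod n)) = (\<Sum>a<n. \<psi> a)"
proof -
  have inj: "inj_on (\<lambda>a. (a + t) mod n) {..<n}"
  proof (rule inj_onI)
    fix a b assume ab: "a \<in> {..<n}" "b \<in> {..<n}" "(a + t) mod n = (b + t) mod n"
    then have "[a = b] (mod n)" using cong_add_rcancel_nat unfolding cong_def by blast
    then show "a = b" using ab by (simp add: cong_def)
  qed
  have img: "(\<lambda>a. (a + t) mod n) ` {..<n} = {..<n}"
    by (rule endo_inj_surj) (use inj assms in auto)
  have "(\<Sum>a<n. \<psi> ((a + t) mod n)) = (\<Sum>a\<in>(\<lambda>a. (a + t) mod n) ` {..<n}. \<psi> a)"
    by (rule sum.reindex[OF inj, symmetric, unfolded comp_def])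
  then show ?thesis unfolding img .
qed

lemma ortho:
  assumes "n > 0" "k = n div gcd d n"
  shows "(\<Sum>a<n. (\<Sum>j<l. FF n f (a + j * d)) * cnj (CC n f k d a)) = of_nat l * (\<Sum>a<n. FF n f a * cnj (CC n f k d a))"
proof -
  have inner: "(\<Sum>a<n. FF n f (a + j * d) * cnj (CC n f k d a)) = (\<Sum>a<n. FF n f a * cnj (CC n f k d a))" for j
  proof -
    have "(\<Sum>a<n. FF n f (a + j * d) * cnj (CC n f k d a))
        = (\<Sum>a<n. (\<lambda>x. FF n f x * cnj (CC n f k d x)) ((a + j * d) mod n))"
      by (intro sum.cong refl) (simp add: FF_mod CC_mod CC_shift[OF assms(2)])
    also have "\<dots> = (\<Sum>a<n. FF n f a * cnj (CC n f k d a))"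
      by (rule shift_inv[OF assms(1)])
    finally show ?thesis .
  qed
  have "(\<Sum>a<n. (\<Sum>j<l. FF n f (a + j * d)) * cnj (CC n f k d a))
      = (\<Sum>a<n. \<Sum>j<l. FF n f (a + j * d) * cnj (CC n f k d a))"
    by (simp add: sum_distrib_right)
  also have "\<dots> = (\<Sum>j<l. \<Sum>a<n. FF n f (a + j * d) * cnj (CC n f k d a))"
    by (rule sum.swap)
  also have "\<dots> = of_nat l * (\<Sum>a<n. FF n f a * cnj (CC n f k d a))"
    unfolding inner by simp
  finally show ?thesis .
qed



lemma ap_inj:
  fixes n d l a :: nat
  assumes "n > 0" "l \<le> n div gcd d n"
  shows "inj_on (\<lambda>k. (a + k * d) mod n) {..<l}"
proof -
  define g where "g = gcd d n"
  define q where "q = n div g"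
  define d' where "d' = d div g"
  have gpos: "g > 0" using assms g_def by simp
  have nq: "n = q * g" unfolding q_def g_def by simp
  have dd: "d = d' * g" unfolding d'_def g_def by simp
  have cop: "coprime q d'" unfolding q_def d'_def g_def
    using div_gcd_coprime[of n d] assms(1) by (simp add: gcd.commute coprime_commute)
  have key: "k1 = k2" if k: "k1 < l" "k2 < l" "k2 \<le> k1" "(a + k1 * d) mod n = (a + k2 * d) mod n" for k1 k2
  proof -
    have "n dvd (a + k1 * d) - (a + k2 * d)"
      using mod_eq_dvd_iff_nat[of "a + k2 * d" "a + k1 * d" n] k by simp
    moreover have "(a + k1 * d) - (a + k2 * d) = (k1 - k2) * d" by (simp add: diff_mult_distrib)
    ultimately have "q * g dvd ((k1 - k2) * d') * g" using nq dd by (simp add: mult.assoc)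
    then have "q dvd (k1 - k2) * d'" using gpos by simp
    then have "q dvd k1 - k2" using cop coprime_dvd_mult_left_iff by blast
    moreover have "k1 - k2 < q" using k assms(2) unfolding q_def g_def by linarith
    ultimately have "k1 - k2 = 0" using dvd_imp_le by (metis gr0I leD)
    then show ?thesis using k by simp
  qed
  show ?thesis
  proof (rule inj_onI)
    fix k1 k2 assume "k1 \<in> {..<l}" "k2 \<in> {..<l}" "(a + k1 * d) mod n = (a + k2 * d) mod n"
    then show "k1 = k2" using key[of k1 k2] key[of k2 k1] by (cases "k2 \<le> k1") auto
  qed
qed

lemma finite_ap: "finite (ap_family n)"
proof -
  have "ap_family n \<subseteq> Pow {..<n} \<or> n = 0" unfolding ap_family_def by auto
  moreover have "n = 0 \<Longrightarrow> ap_family n = {}" unfolding ap_family_def by auto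
  ultimately show ?thesis by (metis finite.emptyI finite_Pow_iff finite_lessThan finite_subset)
qed

lemma ap_bound:
  assumes "n > 0" "a < n" "d < n" "l \<le> n div gcd d n"
  shows "cmod (\<Sum>j<l. FF n f (a + j * d)) \<le> T_f n f"
proof -
  define A where "A = (\<lambda>k. (a + k * d) mod n) ` {..<l}"
  have "A = {(a + k * d) mod n | k. k < l}" unfolding A_def by auto
  then have Ain: "A \<in> ap_family n" unfolding ap_family_def using assms by blast
  have "setsum_f f A = (\<Sum>j<l. FF n f (a + j * d))"
    unfolding setsum_f_def A_def FF_def
    by (subst sum.reindex[OF ap_inj[OF assms(1,4)]]) simp
  moreover have "cmod (setsum_f f A) \<le> T_f n f"
    unfolding T_f_def by (rule Max_ge) (use Ain finite_ap in auto)
  ultimately show ?thesis by simp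
qed

lemma T_nonneg: assumes "n > 0" shows "0 \<le> T_f n f"
  using ap_bound[OF assms, of 0 0 0 f] assms by simp

lemma sum_mod_rep: "(\<Sum>a<k*g. h (a mod g)) = of_nat k * (\<Sum>a<(g::nat). h a)"
proof (induction k)
  case 0 then show ?case by simp
next
  case (Suc k)
  have "(\<Sum>a<Suc k*g. h (a mod g)) = (\<Sum>a<k*g + g. h (a mod g))" by (simp add: add.commute)
  also have "\<dots> = (\<Sum>a<k*g. h (a mod g)) + (\<Sum>a<g. h ((k*g + a) mod g))" by (rule sum_split)
  also have "(\<Sum>a<g. h ((k*g + a) mod g)) = (\<Sum>a<g. h a)" by (intro sum.cong refl) simp
  finally show ?case using Suc by (simp add: algebra_simps)
qed

lemma coset:
  fixes n d a :: nat
  assumes "n > 0"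
  defines "g \<equiv> gcd d n"
  defines "k \<equiv> n div gcd d n"
  shows "CC n f k d a = g_f n f (a mod g) g"
proof -
  have gpos: "g > 0" using assms g_def by simp
  have nk: "n = k * g" unfolding k_def g_def by simp
  have gd: "g dvd d" "g dvd n" unfolding g_def by auto
  define R where "R = {x. x < n \<and> x mod g = a mod g}"
  have R_img: "R = (\<lambda>i. a mod g + i * g) ` {..<k}"
  proof (intro equalityI subsetI)
    fix x assume "x \<in> R"
    then have x: "x < n" "x mod g = a mod g" unfolding R_def by auto
    have "x = a mod g + (x div g) * g" using x(2) by (metis mod_div_mult_eq add.commute)
    moreover have "x div g < k" using x(1) nk gpos by (simp add: div_less_iff_less_mult)
    ultimately show "x \<in> (\<lambda>i. a mod g + i * g) ` {..<k}" by blast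
  next
    fix x assume "x \<in> (\<lambda>i. a mod g + i * g) ` {..<k}"
    then obtain i where i: "i < k" "x = a mod g + i * g" by auto
    have "a mod g + i * g < g + i * g" using gpos by simp
    also have "\<dots> = Suc i * g" by simp
    also have "\<dots> \<le> k * g" using i(1) by (intro mult_right_mono) auto
    finally have "x < n" using i nk by simp
    moreover have "x mod g = a mod g" using i by simp
    ultimately show "x \<in> R" unfolding R_def by simp
  qed
  have cardR: "card R = k" unfolding R_img using gpos
    by (subst card_image) (auto simp: inj_on_def)
  have inj: "inj_on (\<lambda>j. (a + j * d) mod n) {..<k}"
    by (rule ap_inj[OF assms(1)]) (simp add: k_def)
  have sub: "(\<lambda>j. (a + j * d) mod n) ` {..<k} \<subseteq> R"
  proof
    fix x assume "x \<in> (\<lambda>j. (a + j * d) mod n) ` {..<k}"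
    then obtain j where j: "x = (a + j * d) mod n" by auto
    obtain d' where d': "d = g * d'" using gd(1) by (elim dvdE)
    have "x mod g = (a + j * d) mod g" using j gd(2) by (simp add: mod_mod_cancel)
    also have "\<dots> = a mod g" unfolding d' by (simp add: mult.left_commute)
    finally show "x \<in> R" unfolding R_def using j assms(1) by simp
  qed
  have img: "(\<lambda>j. (a + j * d) mod n) ` {..<k} = R"
    using card_subset_eq[OF _ sub] card_image[OF inj] cardR unfolding R_def by simp
  have gset: "{x. x < n \<and> (\<exists>j<n. x = (a mod g + j * g) mod n)} = R"
  proof (intro equalityI subsetI)
    fix x assume "x \<in> {x. x < n \<and> (\<exists>j<n. x = (a mod g + j * g) mod n)}"
    then obtain j where j: "x < n" "x = (a mod g + j * g) mod n" by auto
    have "x mod g = (a mod g + j * g) mod g" using j gd(2) by (simp add: mod_mod_cancel)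
    also have "\<dots> = a mod g" by simp
    finally show "x \<in> R" unfolding R_def using j by simp
  next
    fix x assume "x \<in> R"
    then have x: "x < n" "x mod g = a mod g" unfolding R_def by auto
    have "x = a mod g + (x div g) * g" using x(2) by (metis mod_div_mult_eq add.commute)
    then have "x = (a mod g + (x div g) * g) mod n" using x(1) by simp
    moreover have "x div g < n" using x(1) by (meson div_le_dividend le_less_trans)
    ultimately show "x \<in> {x. x < n \<and> (\<exists>j<n. x = (a mod g + j * g) mod n)}" using x(1) by blast
  qed
  have "CC n f k d a = sum f ((\<lambda>j. (a + j * d) mod n) ` {..<k})"
    unfolding CC_def FF_def by (subst sum.reindex[OF inj]) simp
  also have "\<dots> = g_f n f (a mod g) g" unfolding img g_f_def gset ..
  finally show ?thesis .
qed



definition Hk :: "nat \<Rightarrow> (nat \<Rightarrow> complex) \<Rightarrow> nat \<Rightarrow> nat \<Rightarrow> real" where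
  "Hk n f m k = (if k < m then (real m)\<^sup>2 / real k * G_f n f (n div k) else 0)"

lemma sq_le_T:
  assumes "cmod z \<le> T"
  shows "(cmod z)\<^sup>2 \<le> T\<^sup>2"
  using assms by (intro power_mono) auto

lemma per_d:
  assumes "n > 0" "d < n"
  shows "(\<Sum>a<n. (cmod (Sd n f m d a))\<^sup>2) \<le> real n * (T_f n f)\<^sup>2 + Hk n f m (n div gcd d n)"
proof -
  define g where "g = gcd d n"
  define k where "k = n div g"
  have gpos: "g > 0" using assms g_def by simp
  have nk: "n = k * g" unfolding k_def g_def by simp
  have kpos: "k > 0" using nk assms by (metis gr0I mult_0)
  have nk2: "n div k = g" using nk kpos by simp
  show ?thesis
  proof (cases "k < m")
    case False
    have "(\<Sum>a<n. (cmod (Sd n f m d a))\<^sup>2) \<le> (\<Sum>a<n. (T_f n f)\<^sup>2)"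
      unfolding Sd_def
      by (intro sum_mono sq_le_T ap_bound assms) (use False in \<open>auto simp: k_def g_def\<close>)
    also have "\<dots> = real n * (T_f n f)\<^sup>2" by simp
    finally show ?thesis using False unfolding Hk_def k_def g_def by simp
  next
    case True
    define q where "q = m div k"
    define r where "r = m mod k"
    have mqr: "m = q * k + r" unfolding q_def r_def by simp
    have rk: "r < k" unfolding r_def using kpos by simp
    let ?C = "CC n f k d"
    let ?P = "\<lambda>a. (\<Sum>j<r. FF n f (a + j * d))"
    define Rc where "Rc = (\<Sum>a<n. (cmod (?C a))\<^sup>2)"
    define RP where "RP = (\<Sum>a<n. (cmod (?P a))\<^sup>2)"
    define X where "X = (\<Sum>a<n. FF n f a * cnj (?C a))"
    have kdef: "k = n div gcd d n" unfolding k_def g_def ..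
    have S: "Sd n f m d a = of_nat q * ?C a + ?P a" for a
      unfolding Sd_def mqr by (rule Sd_decomp[OF kdef])
    have o1: "(\<Sum>a<n. ?C a * cnj (?C a)) = of_nat k * X"
      unfolding X_def using ortho[OF assms(1) kdef, where l=k and f=f] unfolding CC_def[symmetric] by simp
    have o2: "(\<Sum>a<n. ?P a * cnj (?C a)) = of_nat r * X"
      unfolding X_def by (rule ortho[OF assms(1) kdef])
    have RcX: "complex_of_real Rc = of_nat k * X"
      unfolding Rc_def of_real_sum complex_norm_square o1 ..
    have Xr: "X = complex_of_real (Rc / real k)" using RcX kpos by (simp add: field_simps)
    have "complex_of_real (\<Sum>a<n. (cmod (Sd n f m d a))\<^sup>2)
        = (\<Sum>a<n. (of_nat q * ?C a + ?P a) * cnj (of_nat q * ?C a + ?P a))"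
      unfolding of_real_sum complex_norm_square S ..
    also have "\<dots> = (of_nat q)^2 * (\<Sum>a<n. ?C a * cnj (?C a)) + of_nat q * (\<Sum>a<n. ?P a * cnj (?C a))
        + of_nat q * cnj (\<Sum>a<n. ?P a * cnj (?C a)) + (\<Sum>a<n. ?P a * cnj (?P a))"
      by (simp add: sum_distrib_left sum.distrib[symmetric] cnj_sum algebra_simps power2_eq_square)
    also have "\<dots> = complex_of_real ((real q)^2 * Rc + 2 * real q * real r * (Rc / real k) + RP)"
    proof -
      have o1': "(\<Sum>a<n. ?C a * cnj (?C a)) = complex_of_real Rc" using o1 RcX by simp
      have oP: "(\<Sum>a<n. ?P a * cnj (?P a)) = complex_of_real RP"
        unfolding RP_def of_real_sum complex_norm_square ..
      show ?thesis unfolding o1' o2 Xr oP using kpos by (simp add: field_simps)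
    qed
    finally have eq: "(\<Sum>a<n. (cmod (Sd n f m d a))\<^sup>2) = (real q)^2 * Rc + 2 * real q * real r * (Rc / real k) + RP"
      by (simp only: of_real_eq_iff)
    have RPb: "RP \<le> real n * (T_f n f)\<^sup>2"
    proof -
      have "RP \<le> (\<Sum>a<n. (T_f n f)\<^sup>2)"
        unfolding RP_def
        by (intro sum_mono sq_le_T ap_bound assms) (use rk in \<open>auto simp: k_def g_def\<close>)
      then show ?thesis by simp
    qed
    have Rc0: "0 \<le> Rc" unfolding Rc_def by (intro sum_nonneg) auto
    have coef: "(real q)^2 + 2 * real q * real r / real k \<le> (real m / real k)^2"
    proof -
      have "real m / real k = real q + real r / real k" using kpos mqr by (simp add: field_simps)
      then have "(real m / real k)^2 = (real q)^2 + 2 * real q * real r / real k + (real r / real k)^2"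
        using kpos by (simp add: power2_eq_square field_simps)
      then show ?thesis by simp
    qed
    have Rc_G: "Rc = real k * G_f n f g"
    proof -
      have "Rc = (\<Sum>a<k*g. (\<lambda>b. (cmod (g_f n f b g))\<^sup>2) (a mod g))"
        unfolding Rc_def nk[symmetric] using coset[OF assms(1), of f d] by (simp add: g_def k_def)
      also have "\<dots> = real k * G_f n f g" unfolding G_f_def by (rule sum_mod_rep)
      finally show ?thesis .
    qed
    have "(\<Sum>a<n. (cmod (Sd n f m d a))\<^sup>2) = ((real q)^2 + 2 * real q * real r / real k) * Rc + RP"
      unfolding eq by (simp add: algebra_simps)
    also have "\<dots> \<le> (real m / real k)^2 * Rc + real n * (T_f n f)\<^sup>2"
      using coef Rc0 RPb by (intro add_mono mult_right_mono) auto
    also have "(real m / real k)^2 * Rc = (real m)\<^sup>2 / real k * G_f n f (n div k)"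
      unfolding Rc_G nk2 using kpos by (simp add: power2_eq_square field_simps)
    finally show ?thesis using True unfolding Hk_def k_def g_def by simp
  qed
qed



lemma div_eq_iff_aux:
  fixes n k g :: nat
  assumes "n > 0" "k dvd n" "g dvd n"
  shows "(n div g = k) = (g = n div k)"
proof
  assume h: "n div g = k"
  have "n div g * g = n" using assms(3) by simp
  then have e: "n = k * g" using h by simp
  have "k \<noteq> 0" using assms(1,2) by auto
  then show "g = n div k" using e by simp
next
  assume h: "g = n div k"
  have "n div k * k = n" using assms(2) by simp
  then have e: "n = g * k" using h by simp
  have "g \<noteq> 0" using assms(1,3) by auto
  then show "n div g = k" using e by simp
qed

lemma sum_Hk:
  assumes "n > 0"
  shows "(\<Sum>d<n. Hk n f m (n div gcd d n))
    = (\<Sum>k\<in>{k. 1 \<le> k \<and> k < m \<and> k dvd n}. (real m)\<^sup>2 * real (totient k) / real k * G_f n f (n div k))"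
proof -
  let ?h = "\<lambda>d. Hk n f m (n div gcd d n)"
  have s1: "(\<Sum>d<n. ?h d) = (\<Sum>d\<in>{0<..n}. ?h d)"
  proof -
    have a: "{..<n} = insert 0 {0<..<n}" using assms by auto
    have b: "{0<..n} = insert n {0<..<n}" using assms by auto
    show ?thesis unfolding a b by simp
  qed
  have s2: "(\<Sum>d\<in>{0<..n}. ?h d) = (\<Sum>k\<in>{k. k dvd n}. \<Sum>d\<in>{d\<in>{0<..n}. n div gcd d n = k}. ?h d)"
  proof (rule sum.group[symmetric])
    show "(\<lambda>d. n div gcd d n) ` {0<..n} \<subseteq> {k. k dvd n}"
    proof
      fix x assume "x \<in> (\<lambda>d. n div gcd d n) ` {0<..n}"
      then obtain d where d: "x = n div gcd d n" by auto
      have "n div gcd d n * gcd d n = n" by simp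
      then show "x \<in> {k. k dvd n}" using d by (metis dvd_triv_left mem_Collect_eq)
    qed
  qed (use assms in simp_all)
  have s3: "(\<Sum>d\<in>{d\<in>{0<..n}. n div gcd d n = k}. ?h d) = real (totient k) * Hk n f m k"
    if "k \<in> {k. k dvd n}" for k
  proof -
    have kd: "k dvd n" using that by simp
    have "n div k * k = n" using kd by simp
    then have nkd: "n div k dvd n" by (metis dvd_triv_left)
    have nkk: "n div (n div k) = k" using div_eq_iff_aux[OF assms kd nkd] by simp
    have e1: "(\<Sum>d\<in>{d\<in>{0<..n}. n div gcd d n = k}. ?h d) = (\<Sum>d\<in>{d\<in>{0<..n}. n div gcd d n = k}. Hk n f m k)"
      by (intro sum.cong refl) auto
    have e2: "{d\<in>{0<..n}. n div gcd d n = k} = {d\<in>{0<..n}. gcd d n = n div k}"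
      using div_eq_iff_aux[OF assms kd] by auto
    have e3: "card {d\<in>{0<..n}. gcd d n = n div k} = totient k"
      using card_gcd_eq_totient[OF assms nkd] nkk by simp
    show ?thesis unfolding e1 e2 using e3 nkk by simp
  qed
  have "(\<Sum>d<n. ?h d) = (\<Sum>k\<in>{k. k dvd n}. real (totient k) * Hk n f m k)"
    unfolding s1 s2 using s3 by (intro sum.cong refl) auto
  also have "\<dots> = (\<Sum>k\<in>{k. k dvd n}. if k < m then (real m)\<^sup>2 * real (totient k) / real k * G_f n f (n div k) else 0)"
    unfolding Hk_def by (intro sum.cong refl) auto
  also have "\<dots> = (\<Sum>k\<in>{k\<in>{k. k dvd n}. k < m}. (real m)\<^sup>2 * real (totient k) / real k * G_f n f (n div k))"
    by (rule sum.inter_filter[symmetric]) (use assms in auto)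
  also have "{k\<in>{k. k dvd n}. k < m} = {k. 1 \<le> k \<and> k < m \<and> k dvd n}"
    using assms by (auto intro: Suc_leI simp: dvd_pos_nat)
  finally show ?thesis .
qed

theorem corollary4p4:
  fixes n m :: nat and f :: "nat \<Rightarrow> complex"
  assumes "0 < n" and "0 < m" and "m \<le> n"
  shows "(real n)\<^sup>2 * (T_f n f)\<^sup>2
      + (\<Sum>k\<in>{k. 1 \<le> k \<and> k < m \<and> k dvd n}.
           (real m)\<^sup>2 * real (totient k) / real k * G_f n f (n div k))
    \<ge> (\<Sum>r<n. (cmod (fourier n f r))\<^sup>2 *
           max ((real m)\<^sup>2 * real (gcd r n) / real n) (real m))"
proof -
  have "(\<Sum>r<n. (cmod (fourier n f r))\<^sup>2 * max ((real m)\<^sup>2 * real (gcd r n) / real n) (real m))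
     \<le> (\<Sum>d<n. \<Sum>a<n. (cmod (Sd n f m d a))\<^sup>2)"
    by (rule rhs_bound[OF assms(1)])
  also have "\<dots> \<le> (\<Sum>d<n. real n * (T_f n f)\<^sup>2 + Hk n f m (n div gcd d n))"
    by (intro sum_mono per_d assms(1)) auto
  also have "\<dots> = (real n)\<^sup>2 * (T_f n f)\<^sup>2 + (\<Sum>d<n. Hk n f m (n div gcd d n))"
    by (simp add: sum.distrib power2_eq_square)
  also have "\<dots> = (real n)\<^sup>2 * (T_f n f)\<^sup>2
      + (\<Sum>k\<in>{k. 1 \<le> k \<and> k < m \<and> k dvd n}. (real m)\<^sup>2 * real (totient k) / real k * G_f n f (n div k))"
    unfolding sum_Hk[OF assms(1)] ..
  finally show ?thesis .
qed

end
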